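(* Let $\varepsilon>0$, let $a,b\in\mathbb{R}^d$ with $a\ne b$, and let $P_{ab}$ be a polygonal $ab$-path with $\|P_{ab}\|\le(1+\varepsilon)\|ab\|$. For $\alpha\in[0,\pi/2]$ let $E(\alpha)$ be the set of edges $e$ of $P_{ab}$ with $\angle(ab,e)<\alpha$. Then for every integer $i$ with $1\le i\le\lfloor(\pi/2)/\sqrt{\varepsilon}\rfloor$ we have $\|E(i\sqrt{\varepsilon})\|\ge(1-2/i^2)\,\|ab\|$, where $\|E(\alpha)\|$ denotes the total length of the edges in $E(\alpha)$.
   Context: For undirected segments $e_1,e_2$ with unit direction vectors $\pm\vec u_1,\pm\vec u_2$, $\angle(e_1,e_2)=\arccos|\vec u_1\cdot\vec u_2|\in[0,\pi/2]$. *)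

theory Defs
  imports "HOL-Analysis.Analysis"
begin

text \<open>Angle between undirected segments with direction vectors u, v:
  arccos of the absolute value of the cosine, in [0, pi/2].
  (Only meaningful for nonzero u, v.)\<close>
definition seg_angle :: "'a::euclidean_space \<Rightarrow> 'a \<Rightarrow> real" where
  "seg_angle u v = arccos (\<bar>u \<bullet> v\<bar> / (norm u * norm v))"

text \<open>A polygonal path is given by its list of vertices ps; its edges are
  the segments [ps!k, ps!(k+1)] for k < length ps - 1.\<close>
definition path_length :: "'a::euclidean_space list \<Rightarrow> real" where
  "path_length ps = (\<Sum>k<length ps - 1. dist (ps!k) (ps!Suc k))"

definition small_angle_edges_length ::
  "'a::euclidean_space \<Rightarrow> 'a \<Rightarrow> 'a list \<Rightarrow> real \<Rightarrow> real" where
  "small_angle_edges_length a b ps \<alpha> =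
     (\<Sum>k\<in>{k. k < length ps - 1 \<and> seg_angle (b - a) (ps!Suc k - ps!k) < \<alpha>}.
        dist (ps!k) (ps!Suc k))"

end

theory Submission
  imports Defs
begin

lemma cos_taylor4:
  fixes x :: real assumes "0 < x" "x \<le> pi/2"
  shows "cos x \<le> 1 - x^2/2 + x^4/24"
proof -
  obtain t where t: "0 < t" "t < x" "cos x = (\<Sum>m<5. cos_coeff m * x ^ m) + (cos (t + 1/2 * real 5 * pi) / fact 5) * x ^ 5"
    using Maclaurin_cos_expansion2[of x 5] assms by auto
  have s: "(\<Sum>m<5. cos_coeff m * x ^ m) = 1 - x^2/2 + x^4/24"
    proof -
    have "{..<5::nat} = {0,1,2,3,4}" by auto
    then show ?thesis by (simp add: cos_coeff_def fact_numeral)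
  qed
  have "cos (t + 1/2 * real 5 * pi) = - sin t"
  proof -
    have "t + 1/2 * real 5 * pi = (t + pi/2) + 2*pi" by simp
    then have "cos (t + 1/2 * real 5 * pi) = cos ((t + pi/2) + 2*pi)" by (simp only:)
    also have "\<dots> = cos (t + pi/2)" by (rule cos_periodic)
    also have "\<dots> = - sin t" by (simp add: cos_add)
    finally show ?thesis .
  qed
  moreover have "sin t \<ge> 0" using t assms by (intro sin_ge_zero) auto
  ultimately have "(cos (t + 1/2 * real 5 * pi) / fact 5) * x ^ 5 \<le> 0"
    using assms by (simp add: divide_nonpos_pos mult_nonpos_nonneg)
  then show ?thesis using t s by linarith
qed

lemma cos_le: fixes x :: real assumes "0 < x" "x \<le> pi/2"
  shows "cos x * (2 + x^2) \<le> 2"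
proof -
  have c: "cos x \<le> 1 - x^2/2 + x^4/24" by (rule cos_taylor4[OF assms])
  have c0: "cos x \<ge> 0" using assms by (intro cos_ge_zero) auto
  have "x^2 \<le> 10" using assms pi_less_4
    proof - have "x \<le> 2" using assms pi_less_4 by linarith then have "x^2 \<le> 2^2" using assms by (intro power_mono) auto then show ?thesis by simp qed
  then have "(1 - x^2/2 + x^4/24) * (2 + x^2) \<le> 2"
  proof -
    have "(1 - x^2/2 + x^4/24) * (2 + x^2) = 2 - x^2*x^2*(10 - x^2)/24"
      by (simp add: field_simps power2_eq_square power4_eq_xxxx)
    moreover have "x^2*x^2*(10 - x^2) \<ge> 0" using \<open>x^2 \<le> 10\<close> by simp
    ultimately show ?thesis by simp
  qed
  moreover have "cos x * (2 + x^2) \<le> (1 - x^2/2 + x^4/24) * (2 + x^2)"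
    using c by (intro mult_right_mono) auto
  ultimately show ?thesis by linarith
qed

lemma angle_bound:
  fixes v e :: "'a::euclidean_space" and \<alpha> :: real
  assumes "v \<noteq> 0" "0 < \<alpha>" "\<alpha> \<le> pi/2" "\<not> seg_angle v e < \<alpha>"
  shows "v \<bullet> e \<le> cos \<alpha> * (norm v * norm e)"
proof (cases "e = 0")
  case True then show ?thesis by simp
next
  case False
  define c where "c = \<bar>v \<bullet> e\<bar> / (norm v * norm e)"
  have np: "norm v * norm e > 0" using assms False by simp
  have c0: "0 \<le> c" using np unfolding c_def by simp
  have c1: "c \<le> 1" using np Cauchy_Schwarz_ineq2[of v e] unfolding c_def by simp
  have "\<alpha> \<le> arccos c" using assms(4) unfolding seg_angle_def c_def by simp
  then have "cos (arccos c) \<le> cos \<alpha>"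
    using assms c0 c1 arccos_bounded[of c] by (intro cos_monotone_0_pi_le) auto
  then have "c \<le> cos \<alpha>" using c0 c1 by simp
  then have "\<bar>v \<bullet> e\<bar> \<le> cos \<alpha> * (norm v * norm e)"
    using np unfolding c_def by (simp add: divide_le_eq)
  then show ?thesis by simp
qed

theorem lemma2:
  fixes a b :: "'a::euclidean_space" and ps :: "'a list" and \<epsilon> :: real and i :: nat
  assumes "\<epsilon> > 0"
    and "a \<noteq> b"
    and "ps \<noteq> []" and "hd ps = a" and "last ps = b"
    and "path_length ps \<le> (1 + \<epsilon>) * dist a b"
    and "1 \<le> i" and "real i \<le> of_int \<lfloor>(pi / 2) / sqrt \<epsilon>\<rfloor>"
  shows "small_angle_edges_length a b ps (real i * sqrt \<epsilon>) \<ge> (1 - 2 / (real i)\<^sup>2) * dist a b"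
proof -
  define n where "n = length ps - 1"
  define v where "v = b - a"
  define D where "D = norm v"
  define \<alpha> where "\<alpha> = real i * sqrt \<epsilon>"
  define e where "e k = ps!Suc k - ps!k" for k
  define S where "S = {k. k < n \<and> seg_angle v (e k) < \<alpha>}"
  define N where "N = {..<n} - S"
  define LE where "LE = (\<Sum>k\<in>S. norm (e k))"
  define LN where "LN = (\<Sum>k\<in>N. norm (e k))"
  have v0: "v \<noteq> 0" using assms(2) unfolding v_def by simp
  have D0: "D > 0" using v0 unfolding D_def by simp
  have dab: "dist a b = D" unfolding D_def v_def by (simp add: dist_norm norm_minus_commute)
  have dk: "dist (ps!k) (ps!Suc k) = norm (e k)" for k
    unfolding e_def by (simp add: dist_norm norm_minus_commute)
  have SE: "small_angle_edges_length a b ps \<alpha> = LE"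
    unfolding small_angle_edges_length_def LE_def S_def dk n_def v_def e_def by simp
  have fin: "finite S" "S \<subseteq> {..<n}" unfolding S_def by auto
  have PL: "path_length ps = LE + LN"
  proof -
    have "path_length ps = (\<Sum>k<n. norm (e k))" unfolding path_length_def n_def dk by simp
    also have "\<dots> = LE + LN" unfolding LE_def LN_def N_def
      using fin by (simp add: sum.subset_diff[of S "{..<n}"] add.commute)
    finally show ?thesis .
  qed
  have tel: "(\<Sum>k<n. e k) = v"
  proof -
    have "(\<Sum>k<n. e k) = ps!n - ps!0" unfolding e_def by (rule sum_lessThan_telescope)
    also have "ps!n = b" using assms(3,5) unfolding n_def by (simp add: last_conv_nth)
    also have "ps!0 = a" using assms(3,4) by (simp add: hd_conv_nth)
    finally show ?thesis unfolding v_def .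
  qed
  have isq: "real i \<le> (pi/2) / sqrt \<epsilon>" using assms(8) by linarith
  have apos: "0 < \<alpha>" using assms(1,7) unfolding \<alpha>_def by simp
  have ale: "\<alpha> \<le> pi/2" using isq assms(1) unfolding \<alpha>_def by (simp add: le_divide_eq)
  define c where "c = cos \<alpha>"
  have ck: "c * (2 + \<alpha>^2) \<le> 2" unfolding c_def by (rule cos_le[OF apos ale])
  have c0: "0 \<le> c" unfolding c_def using apos ale by (intro cos_ge_zero) auto
  have "D * D = v \<bullet> v" unfolding D_def by (simp add: power2_norm_eq_inner[symmetric] power2_eq_square[symmetric])
  also have "\<dots> = (\<Sum>k<n. v \<bullet> e k)" proof -
    have "(\<Sum>k<n. v \<bullet> e k) = v \<bullet> (\<Sum>k<n. e k)" by (simp add: inner_sum_right)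
    then show ?thesis using tel by simp
  qed
  also have "\<dots> = (\<Sum>k\<in>S. v \<bullet> e k) + (\<Sum>k\<in>N. v \<bullet> e k)" unfolding N_def
      using fin by (simp add: sum.subset_diff[of S "{..<n}"] add.commute)
  also have "\<dots> \<le> (\<Sum>k\<in>S. D * norm (e k)) + (\<Sum>k\<in>N. c * (D * norm (e k)))"
  proof (rule add_mono; rule sum_mono)
    fix k show "v \<bullet> e k \<le> D * norm (e k)" unfolding D_def by (rule norm_cauchy_schwarz)
  next
    fix k assume "k \<in> N"
    then have "\<not> seg_angle v (e k) < \<alpha>" unfolding N_def S_def by auto
    then show "v \<bullet> e k \<le> c * (D * norm (e k))" unfolding c_def D_def
      using angle_bound[OF v0 apos ale] by blast
  qed
  also have "\<dots> = D * (LE + c * LN)" unfolding LE_def LN_def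
    by (simp add: sum_distrib_left algebra_simps)
  finally have "D * D \<le> D * (LE + c * LN)" .
  then have key: "D \<le> LE + c * LN" using D0 by simp
  have P: "LE + LN \<le> (1 + \<epsilon>) * D" using assms(6) PL dab by simp
  have a2: "\<alpha>^2 = real i ^ 2 * \<epsilon>" unfolding \<alpha>_def using assms(1) by (simp add: power_mult_distrib)
  have LN0: "LN \<ge> 0" unfolding LN_def by (simp add: sum_nonneg)
  have c1: "c < 1"
  proof (rule ccontr)
    assume "\<not> c < 1"
    then have "1 * \<alpha>^2 \<le> c * \<alpha>^2" by (intro mult_right_mono) auto
    moreover have "\<alpha>^2 > 0" using apos by simp
    moreover have "c * (2 + \<alpha>^2) = 2*c + c*\<alpha>^2" by (simp add: algebra_simps)
    ultimately show False using ck \<open>\<not> c < 1\<close> by linarith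
  qed
  have "D \<le> LE + c * ((1 + \<epsilon>) * D - LE)"
  proof -
    have "c * LN \<le> c * ((1 + \<epsilon>) * D - LE)" using P c0 by (intro mult_left_mono) auto
    then show ?thesis using key by linarith
  qed
  then have h1: "(1 - c) * D - c * \<epsilon> * D \<le> (1 - c) * LE" by (simp add: algebra_simps)
  have ii: "real i ^ 2 > 0" using assms(7) by simp
  have "c * \<epsilon> * real i ^ 2 \<le> 2 * (1 - c)" using ck a2 by (simp add: algebra_simps)
  then have "c * \<epsilon> \<le> (2 / real i ^ 2) * (1 - c)" using ii by (simp add: field_simps)
  then have "c * \<epsilon> * D \<le> (2 / real i ^ 2) * (1 - c) * D" using D0 by (intro mult_right_mono) auto
  with h1 have "(1 - c) * ((1 - 2 / real i ^ 2) * D) \<le> (1 - c) * LE" by (simp add: algebra_simps)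
  then have "(1 - 2 / real i ^ 2) * D \<le> LE" using c1 by simp
  then show ?thesis using SE dab unfolding \<alpha>_def by simp
qed

end
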